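(* The top cycle is the only robust dominant set rule that satisfies set non-imposition.
   Context: Let $A$ be a finite set of alternatives; preference profiles $R$ consist of strict total orders $\succ_i$ on $A$ for the voters $i$ of a finite non-empty electorate $N\subseteq\{1,2,\dots\}$, and $\mathcal{R}^*(A)$ is the set of all such profiles over all electorates. The majority margin is $g_R(x,y)=|\{i: x\succ_i y\}|-|\{i: y\succ_i x\}|$; $x\succsim_R y$ iff $g_R(x,y)\ge0$, with strict part $\succ_R$. A non-empty $X\subseteq A$ is dominant in $R$ if $x\succ_R y$ for all $x\in X$, $y\in A\setminus X$. The top cycle $\mathrm{TC}(R)$ is the inclusion-smallest dominant set. A social choice correspondence (SCC) is a map $f:\mathcal{R}^*(A)\to 2^A\setminus\{\emptyset\}$. $f$ is a dominant set rule if $f(R)$ is dominant in $R$ for every $R$; it is robust if $f(R')\subseteq f(R)$ for all profiles $R,R'$ such that $f(R)$ is dominant in $R'$. $f$ satisfies set non-imposition if for every non-empty $X\subseteq A$ there is a profile $R$ with $f(R)=X$. *)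

theory Defs
  imports Main
begin

text \<open>Alternatives: the finite type 'a (A = UNIV).\<close>

type_synonym 'a profile = "nat set \<times> (nat \<Rightarrow> 'a rel)"

definition is_profile :: "'a profile \<Rightarrow> bool" where
  "is_profile p \<longleftrightarrow> finite (fst p) \<and> fst p \<noteq> {} \<and> 0 \<notin> fst p
     \<and> (\<forall>i\<in>fst p. strict_linear_order (snd p i))
     \<and> (\<forall>i. i \<notin> fst p \<longrightarrow> snd p i = {})"

definition margin :: "'a profile \<Rightarrow> 'a \<Rightarrow> 'a \<Rightarrow> int" where
  "margin p x y = int (card {i\<in>fst p. (x, y) \<in> snd p i}) - int (card {i\<in>fst p. (y, x) \<in> snd p i})"

definition maj_strict :: "'a profile \<Rightarrow> 'a \<Rightarrow> 'a \<Rightarrow> bool" where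
  "maj_strict p x y \<longleftrightarrow> margin p x y \<ge> 0 \<and> \<not> margin p y x \<ge> 0"

definition dominant :: "'a profile \<Rightarrow> 'a set \<Rightarrow> bool" where
  "dominant p X \<longleftrightarrow> X \<noteq> {} \<and> (\<forall>x\<in>X. \<forall>y. y \<notin> X \<longrightarrow> maj_strict p x y)"

definition top_cycle :: "'a profile \<Rightarrow> 'a set" where
  "top_cycle p = (THE X. dominant p X \<and> (\<forall>Y. dominant p Y \<longrightarrow> X \<subseteq> Y))"

definition is_scc :: "('a profile \<Rightarrow> 'a set) \<Rightarrow> bool" where
  "is_scc f \<longleftrightarrow> (\<forall>p. is_profile p \<longrightarrow> f p \<noteq> {})"

definition dominant_set_rule :: "('a profile \<Rightarrow> 'a set) \<Rightarrow> bool" where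
  "dominant_set_rule f \<longleftrightarrow> (\<forall>p. is_profile p \<longrightarrow> dominant p (f p))"

definition robust :: "('a profile \<Rightarrow> 'a set) \<Rightarrow> bool" where
  "robust f \<longleftrightarrow> (\<forall>p p'. is_profile p \<longrightarrow> is_profile p' \<longrightarrow> dominant p' (f p) \<longrightarrow> f p' \<subseteq> f p)"

definition set_non_imposition :: "('a profile \<Rightarrow> 'a set) \<Rightarrow> bool" where
  "set_non_imposition f \<longleftrightarrow> (\<forall>X. X \<noteq> {} \<longrightarrow> (\<exists>p. is_profile p \<and> f p = X))"

end

theory Submission
  imports Defs
begin

lemma dom_cmp:
  assumes "dominant p X" "dominant p Y"
  shows "X \<subseteq> Y \<or> Y \<subseteq> X"
proof (rule ccontr)
  assume "\<not> (X \<subseteq> Y \<or> Y \<subseteq> X)"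
  then obtain x y where "x \<in> X" "x \<notin> Y" "y \<in> Y" "y \<notin> X" by blast
  then have "maj_strict p x y" "maj_strict p y x" using assms unfolding dominant_def by auto
  then show False unfolding maj_strict_def by auto
qed

lemma dom_univ: "dominant p (UNIV :: 'a set)"
  unfolding dominant_def by auto

lemma tc_prop:
  fixes p :: "'a::finite profile"
  shows "dominant p (top_cycle p) \<and> (\<forall>Y. dominant p Y \<longrightarrow> top_cycle p \<subseteq> Y)"
proof -
  obtain X where X: "dominant p X" "\<forall>Y. dominant p Y \<longrightarrow> card X \<le> card Y"
    using ex_has_least_nat[where P="dominant p" and k=UNIV and m=card] dom_univ by blast
  have min: "\<forall>Y. dominant p Y \<longrightarrow> X \<subseteq> Y"
  proof (intro allI impI)
    fix Y assume Y: "dominant p Y"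
    show "X \<subseteq> Y"
    proof (rule ccontr)
      assume "\<not> X \<subseteq> Y"
      then have "Y \<subset> X" using dom_cmp[OF X(1) Y] by blast
      then have "card Y < card X" by (simp add: psubset_card_mono)
      then show False using X(2) Y by force
    qed
  qed
  have "top_cycle p = X" unfolding top_cycle_def
    by (rule the_equality) (use X min in auto)
  then show ?thesis using X min by simp
qed

lemma card12: "card {i\<in>{1,2::nat}. P i} = (if P 1 then 1 else 0) + (if P 2 then (1::nat) else 0)"
proof (cases "P 1"; cases "P 2")
  assume "P 1" "P 2" then have "{i\<in>{1,2::nat}. P i} = {1,2}" by auto
  then show ?thesis using \<open>P 1\<close> \<open>P 2\<close> by simp
next
  assume "P 1" "\<not> P 2" then have "{i\<in>{1,2::nat}. P i} = {1}" by auto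
  then show ?thesis using \<open>P 1\<close> \<open>\<not> P 2\<close> by simp
next
  assume "\<not> P 1" "P 2" then have "{i\<in>{1,2::nat}. P i} = {2}" by auto
  then show ?thesis using \<open>\<not> P 1\<close> \<open>P 2\<close> by simp
next
  assume "\<not> P 1" "\<not> P 2" then have "{i\<in>{1,2::nat}. P i} = {}" by auto
  then show ?thesis using \<open>\<not> P 1\<close> \<open>\<not> P 2\<close> by simp
qed

lemma slo_rank:
  fixes h :: "'a \<Rightarrow> int"
  assumes "inj h"
  shows "strict_linear_order {(a,b). h a < h b}"
  using assms unfolding strict_linear_order_on_def trans_def irrefl_def total_on_def inj_def
  by (auto, metis not_less_iff_gr_or_eq)

lemma tc_nonimp:
  fixes X :: "'a::finite set"
  assumes "X \<noteq> {}"
  shows "\<exists>p. is_profile p \<and> top_cycle p = X"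
proof -
  obtain g :: "'a \<Rightarrow> nat" and n where g: "g ` UNIV = {i. i < n}" "inj g"
    using finite_imp_inj_to_nat_seg[of "UNIV :: 'a set"] by auto
  have gn: "g x < n" for x using g(1) by auto
  define h1 where "h1 x = (if x \<in> X then int (g x) else int n + int (g x))" for x
  define h2 where "h2 x = (if x \<in> X then - int (g x) else int n + int (g x))" for x
  have i1: "inj h1" using g(2) gn unfolding inj_def h1_def
    by (metis add_left_cancel not_add_less1 of_nat_add of_nat_eq_iff of_nat_less_iff)
  have i2: "inj h2" using g(2) gn unfolding inj_def h2_def
    by (smt (verit) of_nat_eq_iff of_nat_0_le_iff)
  define R where "R i = (if i = 1 then {(a,b). h1 a < h1 b} else if i = (2::nat) then {(a,b). h2 a < h2 b} else {})" for i
  define p where "p = ({1,2::nat}, R)"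
  have prof: "is_profile p"
    unfolding is_profile_def p_def using slo_rank[OF i1] slo_rank[OF i2] by (auto simp: R_def)
  have m: "margin p a b = (if h1 a < h1 b then 1 else 0) + (if h2 a < h2 b then 1 else 0)
          - (if h1 b < h1 a then 1 else 0) - (if h2 b < h2 a then 1 else 0)" for a b
    unfolding margin_def p_def fst_conv snd_conv card12 by (simp add: R_def)
  have ms: "maj_strict p x y" if "x \<in> X" "y \<notin> X" for x y
    unfolding maj_strict_def using that gn[of x] gn[of y] by (auto simp: m h1_def h2_def)
  have domX: "dominant p X" unfolding dominant_def using assms ms by blast
  have dX: "\<And>a b. b \<in> X \<Longrightarrow> \<not> maj_strict p a b"
  proof -
    fix a b assume b: "b \<in> X"
    show "\<not> maj_strict p a b"
    proof (cases "a \<in> X")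
      case True
      then show ?thesis using b g(2) unfolding maj_strict_def inj_def
        by (auto simp: m h1_def h2_def)
    next
      case False
      then show ?thesis using b gn[of a] gn[of b] unfolding maj_strict_def
        by (auto simp: m h1_def h2_def)
    qed
  qed
  have "X \<subseteq> Y" if Y: "dominant p Y" for Y
  proof
    fix x assume x: "x \<in> X"
    show "x \<in> Y"
    proof (rule ccontr)
      assume "x \<notin> Y"
      obtain d where "d \<in> Y" using Y unfolding dominant_def by auto
      then have "maj_strict p d x" using Y \<open>x \<notin> Y\<close> unfolding dominant_def by auto
      then show False using dX x by blast
    qed
  qed
  then have "top_cycle p = X" using tc_prop[of p] domX by blast
  then show ?thesis using prof by blast
qed

theorem lemma1:
  fixes f :: "'a::finite profile \<Rightarrow> 'a set"
  assumes "is_scc f"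
  shows "(dominant_set_rule f \<and> robust f \<and> set_non_imposition f)
         \<longleftrightarrow> (\<forall>p. is_profile p \<longrightarrow> f p = top_cycle p)"
proof
  assume A: "dominant_set_rule f \<and> robust f \<and> set_non_imposition f"
  show "\<forall>p. is_profile p \<longrightarrow> f p = top_cycle p"
  proof (intro allI impI)
    fix p :: "'a profile" assume p: "is_profile p"
    have tc: "dominant p (top_cycle p)" using tc_prop by blast
    then have ne: "top_cycle p \<noteq> {}" unfolding dominant_def by blast
    obtain p0 where p0: "is_profile p0" "f p0 = top_cycle p"
      using A ne unfolding set_non_imposition_def by blast
    have "f p \<subseteq> f p0" using A p p0 tc unfolding robust_def by metis
    moreover have "top_cycle p \<subseteq> f p" using A p tc_prop unfolding dominant_set_rule_def by blast
    ultimately show "f p = top_cycle p" using p0 by blast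
  qed
next
  assume B: "\<forall>p. is_profile p \<longrightarrow> f p = top_cycle p"
  have "dominant_set_rule f" unfolding dominant_set_rule_def using B tc_prop by metis
  moreover have "robust f" unfolding robust_def using B tc_prop by metis
  moreover have "set_non_imposition f" unfolding set_non_imposition_def using B tc_nonimp by metis
  ultimately show "dominant_set_rule f \<and> robust f \<and> set_non_imposition f" by blast
qed

end
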